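(* Let $X$ be a square-free word of length $4$ and $Y$ a square-free word of length $6$. Then there exist a length-2 factor $a_1a_2$ of $X$ and a length-2 factor $b_1b_2$ of $Y$ (with $a_1,a_2,b_1,b_2$ letters) such that $a_1\notin\{b_1,b_2\}$ and $b_2\notin\{a_1,a_2\}$.
   Context: A word is square-free if it has no factor of the form $UU$ with $U$ nonempty. A factor is a contiguous subword. *)

theory Defs
  imports Main
begin

definition factor :: "'a list \<Rightarrow> 'a list \<Rightarrow> bool" where
  "factor u w \<longleftrightarrow> (\<exists>p s. w = p @ u @ s)"

definition square_free :: "'a list \<Rightarrow> bool" where
  "square_free w \<longleftrightarrow> \<not> (\<exists>u. u \<noteq> [] \<and> factor (u @ u) w)"

end

theory Submission
  imports Defs
begin

lemma sq: "square_free w \<Longrightarrow> u \<noteq> [] \<Longrightarrow> w = p @ u @ u @ s \<Longrightarrow> False"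
  unfolding square_free_def factor_def by (metis append.assoc)

lemma fac: "w = p @ [a, b] @ s \<Longrightarrow> factor [a, b] w"
  unfolding factor_def by blast

lemma disj0: "P \<Longrightarrow> P \<or> Q1 \<or> Q2 \<or> Q3 \<or> Q4 \<or> Q5 \<or> Q6 \<or> Q7 \<or> Q8 \<or> Q9 \<or> Q10 \<or> Q11 \<or> Q12 \<or> Q13 \<or> Q14" by simp
lemma disj1: "P \<Longrightarrow> Q0 \<or> P \<or> Q2 \<or> Q3 \<or> Q4 \<or> Q5 \<or> Q6 \<or> Q7 \<or> Q8 \<or> Q9 \<or> Q10 \<or> Q11 \<or> Q12 \<or> Q13 \<or> Q14" by simp
lemma disj2: "P \<Longrightarrow> Q0 \<or> Q1 \<or> P \<or> Q3 \<or> Q4 \<or> Q5 \<or> Q6 \<or> Q7 \<or> Q8 \<or> Q9 \<or> Q10 \<or> Q11 \<or> Q12 \<or> Q13 \<or> Q14" by simp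
lemma disj3: "P \<Longrightarrow> Q0 \<or> Q1 \<or> Q2 \<or> P \<or> Q4 \<or> Q5 \<or> Q6 \<or> Q7 \<or> Q8 \<or> Q9 \<or> Q10 \<or> Q11 \<or> Q12 \<or> Q13 \<or> Q14" by simp
lemma disj4: "P \<Longrightarrow> Q0 \<or> Q1 \<or> Q2 \<or> Q3 \<or> P \<or> Q5 \<or> Q6 \<or> Q7 \<or> Q8 \<or> Q9 \<or> Q10 \<or> Q11 \<or> Q12 \<or> Q13 \<or> Q14" by simp
lemma disj5: "P \<Longrightarrow> Q0 \<or> Q1 \<or> Q2 \<or> Q3 \<or> Q4 \<or> P \<or> Q6 \<or> Q7 \<or> Q8 \<or> Q9 \<or> Q10 \<or> Q11 \<or> Q12 \<or> Q13 \<or> Q14" by simp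
lemma disj6: "P \<Longrightarrow> Q0 \<or> Q1 \<or> Q2 \<or> Q3 \<or> Q4 \<or> Q5 \<or> P \<or> Q7 \<or> Q8 \<or> Q9 \<or> Q10 \<or> Q11 \<or> Q12 \<or> Q13 \<or> Q14" by simp
lemma disj7: "P \<Longrightarrow> Q0 \<or> Q1 \<or> Q2 \<or> Q3 \<or> Q4 \<or> Q5 \<or> Q6 \<or> P \<or> Q8 \<or> Q9 \<or> Q10 \<or> Q11 \<or> Q12 \<or> Q13 \<or> Q14" by simp
lemma disj8: "P \<Longrightarrow> Q0 \<or> Q1 \<or> Q2 \<or> Q3 \<or> Q4 \<or> Q5 \<or> Q6 \<or> Q7 \<or> P \<or> Q9 \<or> Q10 \<or> Q11 \<or> Q12 \<or> Q13 \<or> Q14" by simp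
lemma disj9: "P \<Longrightarrow> Q0 \<or> Q1 \<or> Q2 \<or> Q3 \<or> Q4 \<or> Q5 \<or> Q6 \<or> Q7 \<or> Q8 \<or> P \<or> Q10 \<or> Q11 \<or> Q12 \<or> Q13 \<or> Q14" by simp
lemma disj10: "P \<Longrightarrow> Q0 \<or> Q1 \<or> Q2 \<or> Q3 \<or> Q4 \<or> Q5 \<or> Q6 \<or> Q7 \<or> Q8 \<or> Q9 \<or> P \<or> Q11 \<or> Q12 \<or> Q13 \<or> Q14" by simp
lemma disj11: "P \<Longrightarrow> Q0 \<or> Q1 \<or> Q2 \<or> Q3 \<or> Q4 \<or> Q5 \<or> Q6 \<or> Q7 \<or> Q8 \<or> Q9 \<or> Q10 \<or> P \<or> Q12 \<or> Q13 \<or> Q14" by simp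
lemma disj12: "P \<Longrightarrow> Q0 \<or> Q1 \<or> Q2 \<or> Q3 \<or> Q4 \<or> Q5 \<or> Q6 \<or> Q7 \<or> Q8 \<or> Q9 \<or> Q10 \<or> Q11 \<or> P \<or> Q13 \<or> Q14" by simp
lemma disj13: "P \<Longrightarrow> Q0 \<or> Q1 \<or> Q2 \<or> Q3 \<or> Q4 \<or> Q5 \<or> Q6 \<or> Q7 \<or> Q8 \<or> Q9 \<or> Q10 \<or> Q11 \<or> Q12 \<or> P \<or> Q14" by simp
lemma disj14: "P \<Longrightarrow> Q0 \<or> Q1 \<or> Q2 \<or> Q3 \<or> Q4 \<or> Q5 \<or> Q6 \<or> Q7 \<or> Q8 \<or> Q9 \<or> Q10 \<or> Q11 \<or> Q12 \<or> Q13 \<or> P" by simp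

lemma core:
  fixes x1 x2 x3 x4 y1 y2 y3 y4 y5 y6 :: 'a
  assumes H: "x1 \<noteq> x2" "x2 \<noteq> x3" "x3 \<noteq> x4" "x1 \<noteq> x3 \<or> x2 \<noteq> x4"
    "y1 \<noteq> y2" "y2 \<noteq> y3" "y3 \<noteq> y4" "y4 \<noteq> y5" "y5 \<noteq> y6"
    "y1 \<noteq> y3 \<or> y2 \<noteq> y4" "y2 \<noteq> y4 \<or> y3 \<noteq> y5" "y3 \<noteq> y5 \<or> y4 \<noteq> y6"
    "y1 \<noteq> y4 \<or> y2 \<noteq> y5 \<or> y3 \<noteq> y6"
  shows "(x1 \<noteq> y1 \<and> x1 \<noteq> y2 \<and> y2 \<noteq> x2) \<or>
    (x1 \<noteq> y2 \<and> x1 \<noteq> y3 \<and> y3 \<noteq> x2) \<or>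
    (x1 \<noteq> y3 \<and> x1 \<noteq> y4 \<and> y4 \<noteq> x2) \<or>
    (x1 \<noteq> y4 \<and> x1 \<noteq> y5 \<and> y5 \<noteq> x2) \<or>
    (x1 \<noteq> y5 \<and> x1 \<noteq> y6 \<and> y6 \<noteq> x2) \<or>
    (x2 \<noteq> y1 \<and> x2 \<noteq> y2 \<and> y2 \<noteq> x3) \<or>
    (x2 \<noteq> y2 \<and> x2 \<noteq> y3 \<and> y3 \<noteq> x3) \<or>
    (x2 \<noteq> y3 \<and> x2 \<noteq> y4 \<and> y4 \<noteq> x3) \<or>
    (x2 \<noteq> y4 \<and> x2 \<noteq> y5 \<and> y5 \<noteq> x3) \<or>
    (x2 \<noteq> y5 \<and> x2 \<noteq> y6 \<and> y6 \<noteq> x3) \<or>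
    (x3 \<noteq> y1 \<and> x3 \<noteq> y2 \<and> y2 \<noteq> x4) \<or>
    (x3 \<noteq> y2 \<and> x3 \<noteq> y3 \<and> y3 \<noteq> x4) \<or>
    (x3 \<noteq> y3 \<and> x3 \<noteq> y4 \<and> y4 \<noteq> x4) \<or>
    (x3 \<noteq> y4 \<and> x3 \<noteq> y5 \<and> y5 \<noteq> x4) \<or>
    (x3 \<noteq> y5 \<and> x3 \<noteq> y6 \<and> y6 \<noteq> x4)"
proof -
  show ?thesis
  proof (cases "x1 = y1")
    assume h1: "x1 = y1"
    show ?thesis
    proof (cases "x1 = y3")
      assume h2: "x1 = y3"
      show ?thesis
      proof (cases "x3 = y2")
        assume h3: "x3 = y2"
        have "x2 \<noteq> y2 \<and> x2 \<noteq> y3 \<and> y3 \<noteq> x3" using H h1 h2 h3 by simp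
        then show ?thesis by (intro disj6) assumption
      next
        assume h3: "x3 \<noteq> y2"
        show ?thesis
        proof (cases "x2 = y2")
          assume h4: "x2 = y2"
          show ?thesis
          proof (cases "x3 = y1")
            assume h5: "x3 = y1"
            have "x2 \<noteq> y3 \<and> x2 \<noteq> y4 \<and> y4 \<noteq> x3" using H h1 h2 h3 h4 h5 by simp
            then show ?thesis by (intro disj7) assumption
          next
            assume h5: "x3 \<noteq> y1"
            show ?thesis
            proof (cases "x4 = y1")
              assume h6: "x4 = y1"
              have "x3 \<noteq> y1 \<and> x3 \<noteq> y2 \<and> y2 \<noteq> x4" using H h1 h2 h3 h4 h5 h6 by simp
              then show ?thesis by (intro disj10) assumption
            next
              assume h6: "x4 \<noteq> y1"
              have "x3 \<noteq> y2 \<and> x3 \<noteq> y3 \<and> y3 \<noteq> x4" using H h1 h2 h3 h4 h5 h6 by simp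
              then show ?thesis by (intro disj11) assumption
            qed
          qed
        next
          assume h4: "x2 \<noteq> y2"
          have "x2 \<noteq> y1 \<and> x2 \<noteq> y2 \<and> y2 \<noteq> x3" using H h1 h2 h3 h4 by simp
          then show ?thesis by (intro disj5) assumption
        qed
      qed
    next
      assume h2: "x1 \<noteq> y3"
      show ?thesis
      proof (cases "x2 = y2")
        assume h7: "x2 = y2"
        have "x1 \<noteq> y2 \<and> x1 \<noteq> y3 \<and> y3 \<noteq> x2" using H h1 h2 h7 by simp
        then show ?thesis by (intro disj1) assumption
      next
        assume h7: "x2 \<noteq> y2"
        show ?thesis
        proof (cases "x2 = y3")
          assume h8: "x2 = y3"
          show ?thesis
          proof (cases "x1 = y4")
            assume h9: "x1 = y4"
            show ?thesis
            proof (cases "x2 = y5")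
              assume h10: "x2 = y5"
              have "x1 \<noteq> y5 \<and> x1 \<noteq> y6 \<and> y6 \<noteq> x2" using H h1 h2 h7 h8 h9 h10 by simp
              then show ?thesis by (intro disj4) assumption
            next
              assume h10: "x2 \<noteq> y5"
              show ?thesis
              proof (cases "x3 = y1")
                assume h11: "x3 = y1"
                have "x2 \<noteq> y1 \<and> x2 \<noteq> y2 \<and> y2 \<noteq> x3" using H h1 h2 h7 h8 h9 h10 h11 by simp
                then show ?thesis by (intro disj5) assumption
              next
                assume h11: "x3 \<noteq> y1"
                show ?thesis
                proof (cases "x1 = y6")
                  assume h12: "x1 = y6"
                  have "x2 \<noteq> y5 \<and> x2 \<noteq> y6 \<and> y6 \<noteq> x3" using H h1 h2 h7 h8 h9 h10 h11 h12 by simp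
                  then show ?thesis by (intro disj9) assumption
                next
                  assume h12: "x1 \<noteq> y6"
                  show ?thesis
                  proof (cases "x2 = y6")
                    assume h13: "x2 = y6"
                    show ?thesis
                    proof (cases "x3 = y2")
                      assume h14: "x3 = y2"
                      have "x2 \<noteq> y4 \<and> x2 \<noteq> y5 \<and> y5 \<noteq> x3" using H h1 h2 h7 h8 h9 h10 h11 h12 h13 h14 by simp
                      then show ?thesis by (intro disj8) assumption
                    next
                      assume h14: "x3 \<noteq> y2"
                      have "x2 \<noteq> y1 \<and> x2 \<noteq> y2 \<and> y2 \<noteq> x3" using H h1 h2 h7 h8 h9 h10 h11 h12 h13 h14 by simp
                      then show ?thesis by (intro disj5) assumption
                    qed
                  next
                    assume h13: "x2 \<noteq> y6"
                    have "x1 \<noteq> y5 \<and> x1 \<noteq> y6 \<and> y6 \<noteq> x2" using H h1 h2 h7 h8 h9 h10 h11 h12 h13 by simp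
                    then show ?thesis by (intro disj4) assumption
                  qed
                qed
              qed
            qed
          next
            assume h9: "x1 \<noteq> y4"
            have "x1 \<noteq> y3 \<and> x1 \<noteq> y4 \<and> y4 \<noteq> x2" using H h1 h2 h7 h8 h9 by simp
            then show ?thesis by (intro disj2) assumption
          qed
        next
          assume h8: "x2 \<noteq> y3"
          have "x1 \<noteq> y2 \<and> x1 \<noteq> y3 \<and> y3 \<noteq> x2" using H h1 h2 h7 h8 by simp
          then show ?thesis by (intro disj1) assumption
        qed
      qed
    qed
  next
    assume h1: "x1 \<noteq> y1"
    show ?thesis
    proof (cases "x1 = y2")
      assume h15: "x1 = y2"
      show ?thesis
      proof (cases "x3 = y1")
        assume h16: "x3 = y1"
        have "x2 \<noteq> y1 \<and> x2 \<noteq> y2 \<and> y2 \<noteq> x3" using H h1 h15 h16 by simp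
        then show ?thesis by (intro disj5) assumption
      next
        assume h16: "x3 \<noteq> y1"
        show ?thesis
        proof (cases "x2 = x4")
          assume h17: "x2 = x4"
          have "x3 \<noteq> y1 \<and> x3 \<noteq> y2 \<and> y2 \<noteq> x4" using H h1 h15 h16 h17 by simp
          then show ?thesis by (intro disj10) assumption
        next
          assume h17: "x2 \<noteq> x4"
          show ?thesis
          proof (cases "x4 = y3")
            assume h18: "x4 = y3"
            have "x2 \<noteq> y2 \<and> x2 \<noteq> y3 \<and> y3 \<noteq> x3" using H h1 h15 h16 h17 h18 by simp
            then show ?thesis by (intro disj6) assumption
          next
            assume h18: "x4 \<noteq> y3"
            show ?thesis
            proof (cases "x1 = y4")
              assume h19: "x1 = y4"
              show ?thesis
              proof (cases "x3 = y3")
                assume h20: "x3 = y3"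
                have "x2 \<noteq> y3 \<and> x2 \<noteq> y4 \<and> y4 \<noteq> x3" using H h1 h15 h16 h17 h18 h19 h20 by simp
                then show ?thesis by (intro disj7) assumption
              next
                assume h20: "x3 \<noteq> y3"
                show ?thesis
                proof (cases "x2 = y1")
                  assume h21: "x2 = y1"
                  have "x2 \<noteq> y2 \<and> x2 \<noteq> y3 \<and> y3 \<noteq> x3" using H h1 h15 h16 h17 h18 h19 h20 h21 by simp
                  then show ?thesis by (intro disj6) assumption
                next
                  assume h21: "x2 \<noteq> y1"
                  show ?thesis
                  proof (cases "x2 = y3")
                    assume h22: "x2 = y3"
                    show ?thesis
                    proof (cases "x3 = y2")
                      assume h23: "x3 = y2"
                      have "x2 \<noteq> y4 \<and> x2 \<noteq> y5 \<and> y5 \<noteq> x3" using H h1 h15 h16 h17 h18 h19 h20 h21 h22 h23 by simp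
                      then show ?thesis by (intro disj8) assumption
                    next
                      assume h23: "x3 \<noteq> y2"
                      have "x2 \<noteq> y1 \<and> x2 \<noteq> y2 \<and> y2 \<noteq> x3" using H h1 h15 h16 h17 h18 h19 h20 h21 h22 h23 by simp
                      then show ?thesis by (intro disj5) assumption
                    qed
                  next
                    assume h22: "x2 \<noteq> y3"
                    have "x2 \<noteq> y2 \<and> x2 \<noteq> y3 \<and> y3 \<noteq> x3" using H h1 h15 h16 h17 h18 h19 h20 h21 h22 by simp
                    then show ?thesis by (intro disj6) assumption
                  qed
                qed
              qed
            next
              assume h19: "x1 \<noteq> y4"
              show ?thesis
              proof (cases "x2 = y3")
                assume h24: "x2 = y3"
                have "x1 \<noteq> y3 \<and> x1 \<noteq> y4 \<and> y4 \<noteq> x2" using H h1 h15 h16 h17 h18 h19 h24 by simp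
                then show ?thesis by (intro disj2) assumption
              next
                assume h24: "x2 \<noteq> y3"
                show ?thesis
                proof (cases "x2 = y4")
                  assume h25: "x2 = y4"
                  show ?thesis
                  proof (cases "x1 = y5")
                    assume h26: "x1 = y5"
                    show ?thesis
                    proof (cases "x3 = y2")
                      assume h27: "x3 = y2"
                      have "x2 \<noteq> y2 \<and> x2 \<noteq> y3 \<and> y3 \<noteq> x3" using H h1 h15 h16 h17 h18 h19 h24 h25 h26 h27 by simp
                      then show ?thesis by (intro disj6) assumption
                    next
                      assume h27: "x3 \<noteq> y2"
                      show ?thesis
                      proof (cases "x2 = y1")
                        assume h28: "x2 = y1"
                        show ?thesis
                        proof (cases "x2 = y6")
                          assume h29: "x2 = y6"
                          have "x3 \<noteq> y5 \<and> x3 \<noteq> y6 \<and> y6 \<noteq> x4" using H h1 h15 h16 h17 h18 h19 h24 h25 h26 h27 h28 h29 by simp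
                          then show ?thesis by (intro disj14) assumption
                        next
                          assume h29: "x2 \<noteq> y6"
                          show ?thesis
                          proof (cases "x3 = y3")
                            assume h30: "x3 = y3"
                            have "x2 \<noteq> y5 \<and> x2 \<noteq> y6 \<and> y6 \<noteq> x3" using H h1 h15 h16 h17 h18 h19 h24 h25 h26 h27 h28 h29 h30 by simp
                            then show ?thesis by (intro disj9) assumption
                          next
                            assume h30: "x3 \<noteq> y3"
                            have "x2 \<noteq> y2 \<and> x2 \<noteq> y3 \<and> y3 \<noteq> x3" using H h1 h15 h16 h17 h18 h19 h24 h25 h26 h27 h28 h29 h30 by simp
                            then show ?thesis by (intro disj6) assumption
                          qed
                        qed
                      next
                        assume h28: "x2 \<noteq> y1"
                        have "x2 \<noteq> y1 \<and> x2 \<noteq> y2 \<and> y2 \<noteq> x3" using H h1 h15 h16 h17 h18 h19 h24 h25 h26 h27 h28 by simp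
                        then show ?thesis by (intro disj5) assumption
                      qed
                    qed
                  next
                    assume h26: "x1 \<noteq> y5"
                    have "x1 \<noteq> y4 \<and> x1 \<noteq> y5 \<and> y5 \<noteq> x2" using H h1 h15 h16 h17 h18 h19 h24 h25 h26 by simp
                    then show ?thesis by (intro disj3) assumption
                  qed
                next
                  assume h25: "x2 \<noteq> y4"
                  have "x1 \<noteq> y3 \<and> x1 \<noteq> y4 \<and> y4 \<noteq> x2" using H h1 h15 h16 h17 h18 h19 h24 h25 by simp
                  then show ?thesis by (intro disj2) assumption
                qed
              qed
            qed
          qed
        qed
      qed
    next
      assume h15: "x1 \<noteq> y2"
      show ?thesis
      proof (cases "x2 = y1")
        assume h31: "x2 = y1"
        have "x1 \<noteq> y1 \<and> x1 \<noteq> y2 \<and> y2 \<noteq> x2" using H h1 h15 h31 by simp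
        then show ?thesis by (intro disj0) assumption
      next
        assume h31: "x2 \<noteq> y1"
        show ?thesis
        proof (cases "x2 = y2")
          assume h32: "x2 = y2"
          show ?thesis
          proof (cases "x1 = y3")
            assume h33: "x1 = y3"
            show ?thesis
            proof (cases "x2 = y4")
              assume h34: "x2 = y4"
              have "x1 \<noteq> y4 \<and> x1 \<noteq> y5 \<and> y5 \<noteq> x2" using H h1 h15 h31 h32 h33 h34 by simp
              then show ?thesis by (intro disj3) assumption
            next
              assume h34: "x2 \<noteq> y4"
              show ?thesis
              proof (cases "x3 = y3")
                assume h35: "x3 = y3"
                have "x2 \<noteq> y3 \<and> x2 \<noteq> y4 \<and> y4 \<noteq> x3" using H h1 h15 h31 h32 h33 h34 h35 by simp
                then show ?thesis by (intro disj7) assumption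
              next
                assume h35: "x3 \<noteq> y3"
                show ?thesis
                proof (cases "x1 = y5")
                  assume h36: "x1 = y5"
                  have "x2 \<noteq> y4 \<and> x2 \<noteq> y5 \<and> y5 \<noteq> x3" using H h1 h15 h31 h32 h33 h34 h35 h36 by simp
                  then show ?thesis by (intro disj8) assumption
                next
                  assume h36: "x1 \<noteq> y5"
                  show ?thesis
                  proof (cases "x2 = y5")
                    assume h37: "x2 = y5"
                    show ?thesis
                    proof (cases "x1 = y6")
                      assume h38: "x1 = y6"
                      show ?thesis
                      proof (cases "x3 = y1")
                        assume h39: "x3 = y1"
                        have "x2 \<noteq> y3 \<and> x2 \<noteq> y4 \<and> y4 \<noteq> x3" using H h1 h15 h31 h32 h33 h34 h35 h36 h37 h38 h39 by simp
                        then show ?thesis by (intro disj7) assumption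
                      next
                        assume h39: "x3 \<noteq> y1"
                        show ?thesis
                        proof (cases "x4 = y2")
                          assume h40: "x4 = y2"
                          have "x3 \<noteq> y2 \<and> x3 \<noteq> y3 \<and> y3 \<noteq> x4" using H h1 h15 h31 h32 h33 h34 h35 h36 h37 h38 h39 h40 by simp
                          then show ?thesis by (intro disj11) assumption
                        next
                          assume h40: "x4 \<noteq> y2"
                          have "x3 \<noteq> y1 \<and> x3 \<noteq> y2 \<and> y2 \<noteq> x4" using H h1 h15 h31 h32 h33 h34 h35 h36 h37 h38 h39 h40 by simp
                          then show ?thesis by (intro disj10) assumption
                        qed
                      qed
                    next
                      assume h38: "x1 \<noteq> y6"
                      have "x1 \<noteq> y5 \<and> x1 \<noteq> y6 \<and> y6 \<noteq> x2" using H h1 h15 h31 h32 h33 h34 h35 h36 h37 h38 by simp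
                      then show ?thesis by (intro disj4) assumption
                    qed
                  next
                    assume h37: "x2 \<noteq> y5"
                    have "x1 \<noteq> y4 \<and> x1 \<noteq> y5 \<and> y5 \<noteq> x2" using H h1 h15 h31 h32 h33 h34 h35 h36 h37 by simp
                    then show ?thesis by (intro disj3) assumption
                  qed
                qed
              qed
            qed
          next
            assume h33: "x1 \<noteq> y3"
            have "x1 \<noteq> y2 \<and> x1 \<noteq> y3 \<and> y3 \<noteq> x2" using H h1 h15 h31 h32 h33 by simp
            then show ?thesis by (intro disj1) assumption
          qed
        next
          assume h32: "x2 \<noteq> y2"
          have "x1 \<noteq> y1 \<and> x1 \<noteq> y2 \<and> y2 \<noteq> x2" using H h1 h15 h31 h32 by simp
          then show ?thesis by (intro disj0) assumption
        qed
      qed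
    qed
  qed
qed

theorem mainTheorem8:
  fixes X Y :: "'a list"
  assumes "square_free X" and "length X = 4"
    and "square_free Y" and "length Y = 6"
  shows "\<exists>a1 a2 b1 b2. factor [a1, a2] X \<and> factor [b1, b2] Y \<and>
           a1 \<notin> {b1, b2} \<and> b2 \<notin> {a1, a2}"
proof -
  obtain x1 x2 x3 x4 where X: "X = [x1,x2,x3,x4]" using assms(2)
    by (auto simp: length_Suc_conv numeral_eq_Suc)
  obtain y1 y2 y3 y4 y5 y6 where Y: "Y = [y1,y2,y3,y4,y5,y6]" using assms(4)
    by (auto simp: length_Suc_conv numeral_eq_Suc)
  have sx: "\<And>p u s. u \<noteq> [] \<Longrightarrow> X = p @ u @ u @ s \<Longrightarrow> False" using sq assms(1) by blast
  have sy: "\<And>p u s. u \<noteq> [] \<Longrightarrow> Y = p @ u @ u @ s \<Longrightarrow> False" using sq assms(3) by blast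
  have x12: "x1 \<noteq> x2"
  proof (rule ccontr)
    assume e: "\<not> (x1 \<noteq> x2)"
    show False by (rule sx[where p="[]" and u="[x1]" and s="[x3,x4]"]) (insert e, simp_all add: X)
  qed
  have x23: "x2 \<noteq> x3"
  proof (rule ccontr)
    assume e: "\<not> (x2 \<noteq> x3)"
    show False by (rule sx[where p="[x1]" and u="[x2]" and s="[x4]"]) (insert e, simp_all add: X)
  qed
  have x34: "x3 \<noteq> x4"
  proof (rule ccontr)
    assume e: "\<not> (x3 \<noteq> x4)"
    show False by (rule sx[where p="[x1,x2]" and u="[x3]" and s="[]"]) (insert e, simp_all add: X)
  qed
  have x1234: "x1 \<noteq> x3 \<or> x2 \<noteq> x4"
  proof (rule ccontr)
    assume e: "\<not> (x1 \<noteq> x3 \<or> x2 \<noteq> x4)"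
    show False by (rule sx[where p="[]" and u="[x1,x2]" and s="[]"]) (insert e, simp_all add: X)
  qed
  have y12: "y1 \<noteq> y2"
  proof (rule ccontr)
    assume e: "\<not> (y1 \<noteq> y2)"
    show False by (rule sy[where p="[]" and u="[y1]" and s="[y3,y4,y5,y6]"]) (insert e, simp_all add: Y)
  qed
  have y23: "y2 \<noteq> y3"
  proof (rule ccontr)
    assume e: "\<not> (y2 \<noteq> y3)"
    show False by (rule sy[where p="[y1]" and u="[y2]" and s="[y4,y5,y6]"]) (insert e, simp_all add: Y)
  qed
  have y34: "y3 \<noteq> y4"
  proof (rule ccontr)
    assume e: "\<not> (y3 \<noteq> y4)"
    show False by (rule sy[where p="[y1,y2]" and u="[y3]" and s="[y5,y6]"]) (insert e, simp_all add: Y)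
  qed
  have y45: "y4 \<noteq> y5"
  proof (rule ccontr)
    assume e: "\<not> (y4 \<noteq> y5)"
    show False by (rule sy[where p="[y1,y2,y3]" and u="[y4]" and s="[y6]"]) (insert e, simp_all add: Y)
  qed
  have y56: "y5 \<noteq> y6"
  proof (rule ccontr)
    assume e: "\<not> (y5 \<noteq> y6)"
    show False by (rule sy[where p="[y1,y2,y3,y4]" and u="[y5]" and s="[]"]) (insert e, simp_all add: Y)
  qed
  have y1234: "y1 \<noteq> y3 \<or> y2 \<noteq> y4"
  proof (rule ccontr)
    assume e: "\<not> (y1 \<noteq> y3 \<or> y2 \<noteq> y4)"
    show False by (rule sy[where p="[]" and u="[y1,y2]" and s="[y5,y6]"]) (insert e, simp_all add: Y)
  qed
  have y2345: "y2 \<noteq> y4 \<or> y3 \<noteq> y5"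
  proof (rule ccontr)
    assume e: "\<not> (y2 \<noteq> y4 \<or> y3 \<noteq> y5)"
    show False by (rule sy[where p="[y1]" and u="[y2,y3]" and s="[y6]"]) (insert e, simp_all add: Y)
  qed
  have y3456: "y3 \<noteq> y5 \<or> y4 \<noteq> y6"
  proof (rule ccontr)
    assume e: "\<not> (y3 \<noteq> y5 \<or> y4 \<noteq> y6)"
    show False by (rule sy[where p="[y1,y2]" and u="[y3,y4]" and s="[]"]) (insert e, simp_all add: Y)
  qed
  have y123456: "y1 \<noteq> y4 \<or> y2 \<noteq> y5 \<or> y3 \<noteq> y6"
  proof (rule ccontr)
    assume e: "\<not> (y1 \<noteq> y4 \<or> y2 \<noteq> y5 \<or> y3 \<noteq> y6)"
    show False by (rule sy[where p="[]" and u="[y1,y2,y3]" and s="[]"]) (insert e, simp_all add: Y)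
  qed
  have fx: "factor [x1,x2] X" "factor [x2,x3] X" "factor [x3,x4] X"
    using fac[of X "[]"] fac[of X "[x1]"] fac[of X "[x1,x2]"] X by auto
  have fy: "factor [y1,y2] Y" "factor [y2,y3] Y" "factor [y3,y4] Y" "factor [y4,y5] Y" "factor [y5,y6] Y"
    using fac[of Y "[]"] fac[of Y "[y1]"] fac[of Y "[y1,y2]"] fac[of Y "[y1,y2,y3]"] fac[of Y "[y1,y2,y3,y4]"] Y by auto
  have D: "(x1 \<noteq> y1 \<and> x1 \<noteq> y2 \<and> y2 \<noteq> x2) \<or>
    (x1 \<noteq> y2 \<and> x1 \<noteq> y3 \<and> y3 \<noteq> x2) \<or>
    (x1 \<noteq> y3 \<and> x1 \<noteq> y4 \<and> y4 \<noteq> x2) \<or>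
    (x1 \<noteq> y4 \<and> x1 \<noteq> y5 \<and> y5 \<noteq> x2) \<or>
    (x1 \<noteq> y5 \<and> x1 \<noteq> y6 \<and> y6 \<noteq> x2) \<or>
    (x2 \<noteq> y1 \<and> x2 \<noteq> y2 \<and> y2 \<noteq> x3) \<or>
    (x2 \<noteq> y2 \<and> x2 \<noteq> y3 \<and> y3 \<noteq> x3) \<or>
    (x2 \<noteq> y3 \<and> x2 \<noteq> y4 \<and> y4 \<noteq> x3) \<or>
    (x2 \<noteq> y4 \<and> x2 \<noteq> y5 \<and> y5 \<noteq> x3) \<or>
    (x2 \<noteq> y5 \<and> x2 \<noteq> y6 \<and> y6 \<noteq> x3) \<or>
    (x3 \<noteq> y1 \<and> x3 \<noteq> y2 \<and> y2 \<noteq> x4) \<or>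
    (x3 \<noteq> y2 \<and> x3 \<noteq> y3 \<and> y3 \<noteq> x4) \<or>
    (x3 \<noteq> y3 \<and> x3 \<noteq> y4 \<and> y4 \<noteq> x4) \<or>
    (x3 \<noteq> y4 \<and> x3 \<noteq> y5 \<and> y5 \<noteq> x4) \<or>
    (x3 \<noteq> y5 \<and> x3 \<noteq> y6 \<and> y6 \<noteq> x4)"
    using core[OF x12 x23 x34 x1234 y12 y23 y34 y45 y56 y1234 y2345 y3456 y123456] .
  have W: "factor [a1,a2] X \<Longrightarrow> factor [b1,b2] Y \<Longrightarrow> a1 \<noteq> b1 \<Longrightarrow> a1 \<noteq> b2 \<Longrightarrow> b2 \<noteq> a2 \<Longrightarrow> ?thesis" for a1 a2 b1 b2
    apply (rule exI[of _ a1], rule exI[of _ a2], rule exI[of _ b1], rule exI[of _ b2])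
    by auto
  show ?thesis using D
     apply (elim disjE conjE)
     apply (rule W[OF fx(1) fy(1)]; assumption)
     apply (rule W[OF fx(1) fy(2)]; assumption)
     apply (rule W[OF fx(1) fy(3)]; assumption)
     apply (rule W[OF fx(1) fy(4)]; assumption)
     apply (rule W[OF fx(1) fy(5)]; assumption)
     apply (rule W[OF fx(2) fy(1)]; assumption)
     apply (rule W[OF fx(2) fy(2)]; assumption)
     apply (rule W[OF fx(2) fy(3)]; assumption)
     apply (rule W[OF fx(2) fy(4)]; assumption)
     apply (rule W[OF fx(2) fy(5)]; assumption)
     apply (rule W[OF fx(3) fy(1)]; assumption)
     apply (rule W[OF fx(3) fy(2)]; assumption)
     apply (rule W[OF fx(3) fy(3)]; assumption)
     apply (rule W[OF fx(3) fy(4)]; assumption)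
     by (rule W[OF fx(3) fy(5)]; assumption)
qed

end
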